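(* Let $\mathcal V_1,\mathcal V_2,\mathcal V_3\in \mathsf F$, $b_i\in B(\mathcal V_i)$, $i=1,2,3$. Then (i) for any $\Lambda\in \mathsf F(\mathcal V_1,\mathcal V_2)$, $\delta_{\mathsf F}(\Lambda(b_1)\|b_3)\ge \delta_{\mathsf F}(b_1\|b_3)$; (ii) for any $\Theta\in \mathsf F(\mathcal V_2,\mathcal V_3)$, $\delta_{\mathsf F}(b_1\|\Theta(b_2))\le \delta_{\mathsf F}(b_1\|b_2)$.
   Context: Let $\mathsf{BS}$ be the category whose objects are finite dimensional real vector spaces $\mathcal V$ endowed with a fixed proper (closed, convex, pointed, generating) cone $\mathcal V^+\subset\mathcal V$ and a base section $B(\mathcal V)$, i.e. a convex subset $B(\mathcal V)\subset\mathcal V^+$ which is a base of the cone $\mathcal V^+\cap\mathrm{span}(B(\mathcal V))$ and satisfies $B(\mathcal V)\cap\mathrm{int}(\mathcal V^+)\neq\emptyset$. Morphisms $\Lambda:\mathcal V\to\mathcal W$ in $\mathsf{BS}$ are linear maps with $\Lambda(\mathcal V^+)\subseteq\mathcal W^+$ and $\Lambda(B(\mathcal V))\subseteq B(\mathcal W)$. The dual object $\mathcal V^*$ carries the dual cone $\mathcal V^{*+}=\{\varphi\in\mathcal V^*:\ \langle\varphi,c\rangle\ge0\ \forall c\in\mathcal V^+\}$ and the dual base section $B(\mathcal V^* )=\{\varphi\in\mathcal V^{*+}:\ \langle\varphi,b\rangle=1\ \forall b\in B(\mathcal V)\}$. With $[-B(\mathcal V^* ),B(\mathcal V^* )]=\{x\in\mathcal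 V^*:\ \exists b\in B(\mathcal V^* ),\ -b\le x\le b\}$, the norm on $\mathcal V$ is $\|x\|_{\mathcal V}=\max_{\psi\in[-B(\mathcal V^* ),B(\mathcal V^* )]}\langle\psi,x\rangle$. Let $\mathsf F$ be a subcategory of $\mathsf{BS}$ such that for any objects $\mathcal V,\mathcal W\in\mathsf F$ the set $\mathsf F(\mathcal V,\mathcal W)$ of morphisms $\mathcal V\to\mathcal W$ in $\mathsf F$ is convex. For objects $\mathcal V,\mathcal W\in\mathsf F$ and $b\in B(\mathcal V)$, $b'\in B(\mathcal W)$, define $\delta_{\mathsf F}(b\|b')=\inf_{\Lambda\in\mathsf F(\mathcal V,\mathcal W)}\|\Lambda(b)-b'\|_{\mathcal W}$. *)

theory Defs
  imports "HOL-Analysis.Analysis"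
begin

text \<open>An object of BS is represented by a finite-dimensional real vector space
(a type of class euclidean_space) together with a cone C and a base section B.
The dual space is represented by the linear functionals on it.\<close>

definition proper_cone :: "'a::euclidean_space set \<Rightarrow> bool" where
  "proper_cone C \<longleftrightarrow> closed C \<and> convex_cone C \<and> C \<inter> uminus ` C = {0}
     \<and> {x - y | x y. x \<in> C \<and> y \<in> C} = UNIV"

definition is_base_of :: "'a::euclidean_space set \<Rightarrow> 'a set \<Rightarrow> bool" where
  "is_base_of B K \<longleftrightarrow> B \<subseteq> K \<and> convex B \<and>
     (\<forall>x \<in> K - {0}. \<exists>!p. fst p > 0 \<and> snd p \<in> B \<and> x = fst p *\<^sub>R snd p)"

definition base_section :: "'a::euclidean_space set \<Rightarrow> 'a set \<Rightarrow> bool" where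
  "base_section C B \<longleftrightarrow> convex B \<and> B \<subseteq> C \<and> is_base_of B (C \<inter> span B)
     \<and> B \<inter> interior C \<noteq> {}"

definition bs_object :: "'a::euclidean_space set \<Rightarrow> 'a set \<Rightarrow> bool" where
  "bs_object C B \<longleftrightarrow> proper_cone C \<and> base_section C B"

definition bs_morphism :: "'a::euclidean_space set \<Rightarrow> 'a set \<Rightarrow> 'b::euclidean_space set
     \<Rightarrow> 'b set \<Rightarrow> ('a \<Rightarrow> 'b) \<Rightarrow> bool" where
  "bs_morphism C B C' B' L \<longleftrightarrow> linear L \<and> L ` C \<subseteq> C' \<and> L ` B \<subseteq> B'"

definition dual_cone :: "'a::euclidean_space set \<Rightarrow> ('a \<Rightarrow> real) set" where
  "dual_cone C = {\<phi>. linear \<phi> \<and> (\<forall>c \<in> C. \<phi> c \<ge> 0)}"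

definition dual_base :: "'a::euclidean_space set \<Rightarrow> 'a set \<Rightarrow> ('a \<Rightarrow> real) set" where
  "dual_base C B = {\<phi> \<in> dual_cone C. \<forall>b \<in> B. \<phi> b = 1}"

text \<open>The order interval [-B(V*), B(V*)] in the dual, w.r.t. the dual cone.\<close>
definition dual_interval :: "'a::euclidean_space set \<Rightarrow> 'a set \<Rightarrow> ('a \<Rightarrow> real) set" where
  "dual_interval C B = {x. linear x \<and> (\<exists>b \<in> dual_base C B.
       (\<lambda>v. b v - x v) \<in> dual_cone C \<and> (\<lambda>v. x v + b v) \<in> dual_cone C)}"

definition bs_norm :: "'a::euclidean_space set \<Rightarrow> 'a set \<Rightarrow> 'a \<Rightarrow> real" where
  "bs_norm C B x = (SUP \<psi> \<in> dual_interval C B. \<psi> x)"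

text \<open>delta_F(b||b') for a hom-set F = F(V,W); W has cone C' and base section B'.
The infimum is taken in the extended reals (infimum over an empty hom-set is +infinity).\<close>
definition delta_F :: "('a \<Rightarrow> 'b) set \<Rightarrow> 'b::euclidean_space set \<Rightarrow> 'b set \<Rightarrow> 'a \<Rightarrow> 'b \<Rightarrow> ereal" where
  "delta_F F C' B' b b' = (INF L \<in> F. ereal (bs_norm C' B' (L b - b')))"

definition convex_maps :: "('a \<Rightarrow> 'b::real_vector) set \<Rightarrow> bool" where
  "convex_maps F \<longleftrightarrow> (\<forall>L \<in> F. \<forall>M \<in> F. \<forall>t::real. 0 \<le> t \<and> t \<le> 1 \<longrightarrow>
      (\<lambda>v. t *\<^sub>R L v + (1 - t) *\<^sub>R M v) \<in> F)"

end

theory Submission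
  imports Defs
begin

lemma zero_notin_interior:
  fixes C :: "'a::euclidean_space set"
  assumes "proper_cone C"
  shows "0 \<notin> interior C"
proof
  assume "0 \<in> interior C"
  then obtain e where e: "e > 0" "ball 0 e \<subseteq> C" by (meson mem_interior)
  obtain i :: 'a where i: "i \<in> Basis" using nonempty_Basis by blast
  have ni: "norm i = 1" using i by simp
  define x where "x = (e/2) *\<^sub>R i"
  have nx: "norm x = e/2" using e ni by (simp add: x_def)
  have "x \<in> C" using e nx by (auto simp: subset_iff dist_norm)
  moreover have "-x \<in> C" using e nx by (auto simp: subset_iff dist_norm)
  ultimately have "x \<in> C \<inter> uminus ` C" by (metis IntI image_eqI minus_minus)
  then have "x = 0" using assms unfolding proper_cone_def by blast
  then show False using nx e by simp
qed

lemma base_uniq: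
  assumes "is_base_of B K" "x \<in> K" "x \<noteq> 0" "s > 0" "t > 0" "p \<in> B" "q \<in> B"
    "x = s *\<^sub>R p" "x = t *\<^sub>R q"
  shows "s = t"
proof -
  have "\<exists>!pr. fst pr > 0 \<and> snd pr \<in> B \<and> x = fst pr *\<^sub>R snd pr"
    using assms(1-3) unfolding is_base_of_def by blast
  then have "(s, p) = (t, q)" using assms(4-9) by (metis fst_conv snd_conv)
  then show ?thesis by simp
qed

lemma cone_scale:
  assumes "convex_cone C" "x \<in> C" "t \<ge> 0"
  shows "t *\<^sub>R x \<in> C"
  using assms unfolding convex_cone_def conic_def by blast

lemma zero_notin_B:
  fixes C :: "'a::euclidean_space set"
  assumes "bs_object C B"
  shows "0 \<notin> B"
proof
  assume z: "0 \<in> B"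
  from assms have pc: "proper_cone C" and bs: "base_section C B"
    unfolding bs_object_def by auto
  obtain b0 where b0: "b0 \<in> B" "b0 \<in> interior C" using bs unfolding base_section_def by blast
  have nz: "b0 \<noteq> 0" using zero_notin_interior[OF pc] b0 by metis
  have cvx: "convex B" using bs unfolding base_section_def by blast
  have h: "(1/2) *\<^sub>R b0 \<in> B"
    using convexD[OF cvx b0(1) z, of "1/2" "1/2"] by simp
  have base: "is_base_of B (C \<inter> span B)" using bs unfolding base_section_def by blast
  have "b0 \<in> C \<inter> span B" using b0 interior_subset span_base by blast
  have "1 = (2::real)"
    by (rule base_uniq[OF base \<open>b0 \<in> C \<inter> span B\<close> nz _ _ b0(1) h]) auto
  then show False by simp
qed

lemma dual_base_nonempty:
  fixes C :: "'a::euclidean_space set"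
  assumes "bs_object C B"
  shows "dual_base C B \<noteq> {}"
proof -
  from assms have pc: "proper_cone C" and bs: "base_section C B"
    unfolding bs_object_def by auto
  have cc: "convex_cone C" using pc unfolding proper_cone_def by blast
  have cvC: "convex C" using cc unfolding convex_cone_def by blast
  obtain b0 where b0: "b0 \<in> B" "b0 \<in> interior C" using bs unfolding base_section_def by blast
  have cvx: "convex B" using bs unfolding base_section_def by blast
  have base: "is_base_of B (C \<inter> span B)" using bs unfolding base_section_def by blast
  have BC: "B \<subseteq> C" using bs unfolding base_section_def by blast
  have z: "0 \<notin> B" using zero_notin_B[OF assms] .
  define T where "T = {\<alpha> *\<^sub>R (p - q) | \<alpha> p q. \<alpha> \<ge> 0 \<and> p \<in> B \<and> q \<in> B}"
  have cT: "convex T"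
  proof (rule convexI)
    fix x y and u v :: real
    assume x: "x \<in> T" and y: "y \<in> T" and uv0: "0 \<le> u" "0 \<le> v" "u + v = 1"
    then have uv: "0 \<le> u \<and> 0 \<le> v \<and> u + v = 1" by simp
    obtain \<alpha>1 p1 q1 where 1: "x = \<alpha>1 *\<^sub>R (p1 - q1)" "\<alpha>1 \<ge> 0" "p1 \<in> B" "q1 \<in> B"
      using x T_def by blast
    obtain \<alpha>2 p2 q2 where 2: "y = \<alpha>2 *\<^sub>R (p2 - q2)" "\<alpha>2 \<ge> 0" "p2 \<in> B" "q2 \<in> B"
      using y T_def by blast
    define \<gamma> where "\<gamma> = u * \<alpha>1 + v * \<alpha>2"
    show "u *\<^sub>R x + v *\<^sub>R y \<in> T"
    proof (cases "\<gamma> = 0")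
      case True
      then have "u * \<alpha>1 = 0" "v * \<alpha>2 = 0" using uv 1 2 \<gamma>_def
        by (smt (verit) mult_nonneg_nonneg)+
      then have "u *\<^sub>R x + v *\<^sub>R y = 0 *\<^sub>R (b0 - b0)" using 1 2 by (cases "u = 0"; cases "v = 0"; auto)
      then show ?thesis using b0 T_def by blast
    next
      case False
      then have gp: "\<gamma> > 0" using uv 1 2 \<gamma>_def
        by (smt (verit) mult_nonneg_nonneg)
      define p where "p = (u * \<alpha>1 / \<gamma>) *\<^sub>R p1 + (v * \<alpha>2 / \<gamma>) *\<^sub>R p2"
      define q where "q = (u * \<alpha>1 / \<gamma>) *\<^sub>R q1 + (v * \<alpha>2 / \<gamma>) *\<^sub>R q2"
      have sum1: "u * \<alpha>1 / \<gamma> + v * \<alpha>2 / \<gamma> = 1" 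
      proof -
        have "u * \<alpha>1 / \<gamma> + v * \<alpha>2 / \<gamma> = \<gamma> / \<gamma>"
          unfolding \<gamma>_def by (simp only: add_divide_distrib)
        then show ?thesis using gp by simp
      qed
      have nn: "u * \<alpha>1 / \<gamma> \<ge> 0" "v * \<alpha>2 / \<gamma> \<ge> 0" using gp uv 1 2 by auto
      have pB: "p \<in> B" unfolding p_def using convexD[OF cvx 1(3) 2(3) nn sum1] .
      have qB: "q \<in> B" unfolding q_def using convexD[OF cvx 1(4) 2(4) nn sum1] .
      have "u *\<^sub>R x + v *\<^sub>R y = \<gamma> *\<^sub>R (p - q)"
        using gp unfolding 1 2 p_def q_def
        by (simp add: algebra_simps)
      then show ?thesis using pB qB gp T_def by fastforce
    qed
  qed
  have "0 = 0 *\<^sub>R (b0 - b0)" by simp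
  then have "0 \<in> T" using b0 unfolding T_def by blast
  have disj: "T \<inter> interior C = {}"
  proof (rule ccontr)
    assume "T \<inter> interior C \<noteq> {}"
    then obtain u where u: "u \<in> T" "u \<in> interior C" by blast
    obtain \<alpha> p q where aq: "u = \<alpha> *\<^sub>R (p - q)" "\<alpha> \<ge> 0" "p \<in> B" "q \<in> B"
      using u T_def by blast
    have un: "u \<noteq> 0" using zero_notin_interior[OF pc] u by metis
    then have ap: "\<alpha> > 0" using aq by (cases "\<alpha> = 0") auto
    have uK: "u \<in> C \<inter> span B"
      proof
      show "u \<in> C" using u interior_subset by blast
      show "u \<in> span B" unfolding aq(1)
        by (rule span_scale[OF span_diff[OF span_base[OF aq(3)] span_base[OF aq(4)]]])
    qed
    then obtain pr where pr: "fst pr > 0" "snd pr \<in> B" "u = fst pr *\<^sub>R snd pr"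
      using base un unfolding is_base_of_def by blast
    define t where "t = fst pr"
    define r where "r = snd pr"
    have tr: "t > 0" "r \<in> B" "u = t *\<^sub>R r" using pr t_def r_def by auto
    define r' where "r' = (t/(t+\<alpha>)) *\<^sub>R r + (\<alpha>/(t+\<alpha>)) *\<^sub>R q"
    have "r' \<in> B" unfolding r'_def
      by (rule convexD[OF cvx tr(2) aq(4)]) (use tr ap in \<open>auto simp: add_divide_distrib[symmetric]\<close>)
    have eq1: "\<alpha> *\<^sub>R p = (t + \<alpha>) *\<^sub>R r'"
    proof -
      have "\<alpha> *\<^sub>R p = u + \<alpha> *\<^sub>R q" using aq by (simp add: algebra_simps)
      also have "\<dots> = t *\<^sub>R r + \<alpha> *\<^sub>R q" using tr by simp
      also have "\<dots> = (t + \<alpha>) *\<^sub>R r'" unfolding r'_def using tr ap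
        by (simp add: scaleR_add_right)
      finally show ?thesis .
    qed
    have pn: "p \<noteq> 0" using z aq by metis
    have xK: "\<alpha> *\<^sub>R p \<in> C \<inter> span B"
      using cone_scale[OF cc _ aq(2)] BC aq(3) span_scale[OF span_base[OF aq(3)]] by blast
    have "\<alpha> *\<^sub>R p \<noteq> 0" using ap pn by simp
    have "\<alpha> = t + \<alpha>"
      by (rule base_uniq[OF base xK \<open>\<alpha> *\<^sub>R p \<noteq> 0\<close> ap _ aq(3) \<open>r' \<in> B\<close> refl eq1])
        (use tr ap in auto)
    then show False using tr by simp
  qed
  obtain a c where ac: "a \<noteq> 0" "\<forall>x\<in>T. inner a x \<le> c" "\<forall>x\<in>interior C. inner a x \<ge> c"
    using separating_hyperplane_sets[OF cT convex_interior[OF cvC] _ _ disj]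
      \<open>0 \<in> T\<close> b0 by blast
  have c0: "c \<ge> 0" using ac(2) \<open>0 \<in> T\<close> by force
  have orth: "inner a (p - q) \<le> 0" if "p \<in> B" "q \<in> B" for p q
  proof (rule ccontr)
    assume "\<not> inner a (p - q) \<le> 0"
    then have pos: "inner a (p - q) > 0" by simp
    define \<alpha> where "\<alpha> = (c + 1) / inner a (p - q)"
    have "\<alpha> \<ge> 0" using pos c0 \<alpha>_def by auto
    then have "\<alpha> *\<^sub>R (p - q) \<in> T" using that T_def by blast
    then have "inner a (\<alpha> *\<^sub>R (p - q)) \<le> c" using ac by blast
    moreover have "inner a (\<alpha> *\<^sub>R (p - q)) = c + 1" using pos \<alpha>_def by simp
    ultimately show False by simp
  qed
  have orth2: "inner a p = inner a b0" if "p \<in> B" for p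
    using orth[OF that b0(1)] orth[OF b0(1) that] by (simp add: inner_diff_right)
  have intpos: "inner a x \<ge> 0" if "x \<in> interior C" for x using ac(3) that c0 by force
  have Cpos: "inner a x \<ge> 0" if "x \<in> C" for x
  proof -
    have "closure (interior C) \<subseteq> {x. inner a x \<ge> 0}"
      by (rule closure_minimal) (use intpos closed_halfspace_ge[of 0 a] in auto)
    moreover have "x \<in> closure C" using that closure_subset by blast
    ultimately show ?thesis using convex_closure_interior[OF cvC] b0 by blast
  qed
  have b0pos: "inner a b0 > 0"
  proof -
    obtain e where e: "e > 0" "ball b0 e \<subseteq> C" using b0(2) by (meson mem_interior)
    define \<epsilon> where "\<epsilon> = e / (2 * norm a)"
    have na: "norm a > 0" using ac by simp
    have ep: "\<epsilon> > 0" using e na \<epsilon>_def by simp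
    have "dist b0 (b0 - \<epsilon> *\<^sub>R a) = e/2" using na ep e by (simp add: dist_norm \<epsilon>_def)
    then have "b0 - \<epsilon> *\<^sub>R a \<in> C" using e by auto
    then have "inner a (b0 - \<epsilon> *\<^sub>R a) \<ge> 0" by (rule Cpos)
    then have "inner a b0 \<ge> \<epsilon> * inner a a" by (simp add: inner_diff_right)
    moreover have "inner a a > 0" using ac by simp
    ultimately show ?thesis using ep by (smt (verit) mult_pos_pos)
  qed
  define a' where "a' = (1 / inner a b0) *\<^sub>R a"
  have lin: "linear (inner a')" using bounded_linear_inner_right bounded_linear.linear by blast
  have "inner a' \<in> dual_base C B"
    unfolding dual_base_def dual_cone_def
  proof (intro CollectI conjI ballI lin)
    fix x assume "x \<in> C"
    then show "inner a' x \<ge> 0" using Cpos b0pos by (simp add: a'_def)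
  next
    fix p assume "p \<in> B"
    then show "inner a' p = 1" using orth2 b0pos by (simp add: a'_def)
  qed
  then show ?thesis by blast
qed

lemma dual_interval_nonempty:
  fixes C :: "'a::euclidean_space set"
  assumes "bs_object C B"
  shows "dual_interval C B \<noteq> {}"
proof -
  obtain \<beta> where b: "\<beta> \<in> dual_base C B" using dual_base_nonempty[OF assms] by blast
  have "\<beta> \<in> dual_cone C" using b dual_base_def by blast
  then have "(\<lambda>x. 0) \<in> dual_interval C B"
    unfolding dual_interval_def using b by (auto intro: linear_zero)
  then show ?thesis by blast
qed

lemma dual_base_bound:
  fixes C :: "'a::euclidean_space set"
  assumes "bs_object C B" "c \<in> C"
  shows "\<exists>K. \<forall>\<beta> \<in> dual_base C B. \<beta> c \<le> K"
proof -
  from assms have bs: "base_section C B" unfolding bs_object_def by auto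
  obtain b0 where b0: "b0 \<in> B" "b0 \<in> interior C" using bs unfolding base_section_def by blast
  obtain e where e: "e > 0" "ball b0 e \<subseteq> C" using b0(2) by (meson mem_interior)
  define \<epsilon> where "\<epsilon> = e / (2 * (norm c + 1))"
  have ep: "\<epsilon> > 0" using e \<epsilon>_def by (simp add: add_pos_nonneg divide_pos_pos add_nonneg_pos)
  have "dist b0 (b0 - \<epsilon> *\<^sub>R c) = \<epsilon> * norm c" using ep by (simp add: dist_norm)
  also have "\<dots> < e"
  proof -
    have "\<epsilon> * norm c \<le> \<epsilon> * (norm c + 1)" using ep by simp
    also have "\<dots> = e/2"
    proof -
      have np: "norm c + 1 \<noteq> 0" by (smt (verit) norm_ge_zero)
      show ?thesis unfolding \<epsilon>_def using np by (simp add: field_simps)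
    qed
    finally show ?thesis using e by simp
  qed
  finally have inC: "b0 - \<epsilon> *\<^sub>R c \<in> C" using e by auto
  have "\<beta> c \<le> 1 / \<epsilon>" if "\<beta> \<in> dual_base C B" for \<beta>
  proof -
    have lb: "linear \<beta>" "\<forall>x\<in>C. \<beta> x \<ge> 0" "\<beta> b0 = 1"
      using that b0 unfolding dual_base_def dual_cone_def by auto
    have "\<beta> (b0 - \<epsilon> *\<^sub>R c) \<ge> 0" using lb inC by blast
    then have "1 - \<epsilon> * \<beta> c \<ge> 0" using lb by (simp add: linear_diff linear_cmul)
    then show ?thesis using ep by (simp add: field_simps)
  qed
  then show ?thesis by blast
qed

lemma dual_interval_bdd:
  fixes C :: "'a::euclidean_space set"
  assumes "bs_object C B"
  shows "bdd_above ((\<lambda>\<psi>. \<psi> x) ` dual_interval C B)"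
proof -
  have pc: "proper_cone C" using assms bs_object_def by blast
  have "x \<in> {x - y | x y. x \<in> C \<and> y \<in> C}" using pc unfolding proper_cone_def by blast
  then obtain c d where cd: "x = c - d" "c \<in> C" "d \<in> C" by blast
  obtain K1 where K1: "\<forall>\<beta> \<in> dual_base C B. \<beta> c \<le> K1" using dual_base_bound[OF assms cd(2)] by blast
  obtain K2 where K2: "\<forall>\<beta> \<in> dual_base C B. \<beta> d \<le> K2" using dual_base_bound[OF assms cd(3)] by blast
  show ?thesis unfolding bdd_above_def
  proof (intro exI ballI)
    fix y assume "y \<in> (\<lambda>\<psi>. \<psi> x) ` dual_interval C B"
    then obtain \<psi> where \<psi>: "\<psi> \<in> dual_interval C B" "y = \<psi> x" by blast
    obtain \<beta> where \<beta>: "linear \<psi>" "\<beta> \<in> dual_base C B" "(\<lambda>v. \<beta> v - \<psi> v) \<in> dual_cone C"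
      "(\<lambda>v. \<psi> v + \<beta> v) \<in> dual_cone C" using \<psi> unfolding dual_interval_def by blast
    have "\<beta> c - \<psi> c \<ge> 0" using \<beta>(3) cd unfolding dual_cone_def by blast
    moreover have "\<psi> d + \<beta> d \<ge> 0" using \<beta>(4) cd unfolding dual_cone_def by blast
    moreover have "\<psi> x = \<psi> c - \<psi> d" using \<beta>(1) cd by (simp add: linear_diff)
    ultimately show "y \<le> K1 + K2" using K1 K2 \<beta>(2) \<psi> by fastforce
  qed
qed

lemma contraction:
  fixes C2 B2 :: "'b::euclidean_space set" and C3 B3 :: "'c::euclidean_space set"
  assumes obj2: "bs_object C2 B2" and obj3: "bs_object C3 B3"
    and mor: "bs_morphism C2 B2 C3 B3 \<Theta>"
  shows "bs_norm C3 B3 (\<Theta> x) \<le> bs_norm C2 B2 x"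
  unfolding bs_norm_def
proof (rule cSUP_least[OF dual_interval_nonempty[OF obj3]])
  fix \<psi> assume \<psi>: "\<psi> \<in> dual_interval C3 B3"
  have lt: "linear \<Theta>" "\<Theta> ` C2 \<subseteq> C3" "\<Theta> ` B2 \<subseteq> B3" using mor unfolding bs_morphism_def by auto
  obtain \<beta> where \<beta>: "linear \<psi>" "\<beta> \<in> dual_base C3 B3" "(\<lambda>v. \<beta> v - \<psi> v) \<in> dual_cone C3"
      "(\<lambda>v. \<psi> v + \<beta> v) \<in> dual_cone C3" using \<psi> unfolding dual_interval_def by blast
  have lb: "linear \<beta>" using \<beta>(2) unfolding dual_base_def dual_cone_def by blast
  have l1: "linear (\<lambda>v. \<beta> v - \<psi> v)" using \<beta>(3) unfolding dual_cone_def by blast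
  have l2: "linear (\<lambda>v. \<psi> v + \<beta> v)" using \<beta>(4) unfolding dual_cone_def by blast
  have "\<beta> \<circ> \<Theta> \<in> dual_base C2 B2"
    using \<beta>(2) lt linear_compose[OF lt(1) lb]
    unfolding dual_base_def dual_cone_def by (auto simp: subset_iff)
  moreover have "(\<lambda>v. (\<beta> \<circ> \<Theta>) v - (\<psi> \<circ> \<Theta>) v) \<in> dual_cone C2"
    using \<beta>(3) lt linear_compose[OF lt(1) l1]
    unfolding dual_cone_def by (auto simp: subset_iff o_def)
  moreover have "(\<lambda>v. (\<psi> \<circ> \<Theta>) v + (\<beta> \<circ> \<Theta>) v) \<in> dual_cone C2"
    using \<beta>(4) lt linear_compose[OF lt(1) l2]
    unfolding dual_cone_def by (auto simp: subset_iff o_def)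
  ultimately have "\<psi> \<circ> \<Theta> \<in> dual_interval C2 B2"
    unfolding dual_interval_def using linear_compose[OF lt(1) \<beta>(1)] by blast
  then have "(\<psi> \<circ> \<Theta>) x \<le> (SUP \<phi> \<in> dual_interval C2 B2. \<phi> x)"
    by (rule cSUP_upper[OF _ dual_interval_bdd[OF obj2]])
  then show "\<psi> (\<Theta> x) \<le> (SUP \<phi> \<in> dual_interval C2 B2. \<phi> x)" by simp
qed

theorem proposition3:
  fixes C1 B1 :: "'a::euclidean_space set"
    and C2 B2 :: "'b::euclidean_space set"
    and C3 B3 :: "'c::euclidean_space set"
    and F12 :: "('a \<Rightarrow> 'b) set" and F13 :: "('a \<Rightarrow> 'c) set" and F23 :: "('b \<Rightarrow> 'c) set"
    and b1 :: 'a and b2 :: 'b and b3 :: 'c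
  assumes obj1: "bs_object C1 B1" and obj2: "bs_object C2 B2" and obj3: "bs_object C3 B3"
    and mor12: "\<forall>L \<in> F12. bs_morphism C1 B1 C2 B2 L"
    and mor13: "\<forall>L \<in> F13. bs_morphism C1 B1 C3 B3 L"
    and mor23: "\<forall>L \<in> F23. bs_morphism C2 B2 C3 B3 L"
    and comp: "\<forall>L \<in> F12. \<forall>M \<in> F23. M \<circ> L \<in> F13"
    and cvx12: "convex_maps F12" and cvx13: "convex_maps F13" and cvx23: "convex_maps F23"
    and b1: "b1 \<in> B1" and b2: "b2 \<in> B2" and b3: "b3 \<in> B3"
  shows "(\<forall>\<Lambda> \<in> F12. delta_F F23 C3 B3 (\<Lambda> b1) b3 \<ge> delta_F F13 C3 B3 b1 b3)
       \<and> (\<forall>\<Theta> \<in> F23. delta_F F13 C3 B3 b1 (\<Theta> b2) \<le> delta_F F12 C2 B2 b1 b2)"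
proof (intro conjI ballI)
  fix \<Lambda> assume \<Lambda>: "\<Lambda> \<in> F12"
  show "delta_F F23 C3 B3 (\<Lambda> b1) b3 \<ge> delta_F F13 C3 B3 b1 b3"
    unfolding delta_F_def
  proof (rule INF_greatest)
    fix M assume M: "M \<in> F23"
    have "M \<circ> \<Lambda> \<in> F13" using comp \<Lambda> M by blast
    then have "(INF K\<in>F13. ereal (bs_norm C3 B3 (K b1 - b3)))
        \<le> ereal (bs_norm C3 B3 ((M \<circ> \<Lambda>) b1 - b3))" by (rule INF_lower)
    then show "(INF K\<in>F13. ereal (bs_norm C3 B3 (K b1 - b3)))
        \<le> ereal (bs_norm C3 B3 (M (\<Lambda> b1) - b3))" by simp
  qed
next
  fix \<Theta> assume \<Theta>: "\<Theta> \<in> F23"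
  have lt: "linear \<Theta>" using mor23 \<Theta> bs_morphism_def by blast
  show "delta_F F13 C3 B3 b1 (\<Theta> b2) \<le> delta_F F12 C2 B2 b1 b2"
    unfolding delta_F_def
  proof (rule INF_greatest)
    fix L assume L: "L \<in> F12"
    have "\<Theta> \<circ> L \<in> F13" using comp \<Theta> L by blast
    then have "(INF K\<in>F13. ereal (bs_norm C3 B3 (K b1 - \<Theta> b2)))
        \<le> ereal (bs_norm C3 B3 ((\<Theta> \<circ> L) b1 - \<Theta> b2))" by (rule INF_lower)
    also have "(\<Theta> \<circ> L) b1 - \<Theta> b2 = \<Theta> (L b1 - b2)" using lt by (simp add: linear_diff)
    also have "ereal (bs_norm C3 B3 (\<Theta> (L b1 - b2))) \<le> ereal (bs_norm C2 B2 (L b1 - b2))"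
      using contraction[OF obj2 obj3] mor23 \<Theta> by (simp del: bs_morphism_def)
    finally show "(INF K\<in>F13. ereal (bs_norm C3 B3 (K b1 - \<Theta> b2)))
        \<le> ereal (bs_norm C2 B2 (L b1 - b2))" .
  qed
qed

end
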